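(* Let $G$ be a finite group. The minimal cardinality of a generating set of $G$ is at most the minimal length $\ell$ of a chain of subgroups $\{e\}=H_0<H_1<\dots<H_\ell=G$ such that every interval $[H_i,H_{i+1}]$ of the subgroup lattice is top Boolean.
   Context: For subgroups $H\subseteq K$ of $G$, $[H,K]$ is the lattice of subgroups between $H$ and $K$. The top interval of a finite lattice $L$ is $[t,\hat 1]$ where $t$ is the meet of all coatoms (maximal elements of $L\setminus\{\hat 1\}$); $L$ is top Boolean if its top interval is a Boolean lattice (distributive, bounded, every element has a unique complement). *)

theory Defs
  imports "HOL-Algebra.Algebra"
begin

definition subgroup_interval :: "('a, 'b) monoid_scheme \<Rightarrow> 'a set \<Rightarrow> 'a set \<Rightarrow> 'a set set" where
  "subgroup_interval G H K = {L. subgroup L G \<and> H \<subseteq> L \<and> L \<subseteq> K}"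

definition subgroup_join :: "('a, 'b) monoid_scheme \<Rightarrow> 'a set \<Rightarrow> 'a set \<Rightarrow> 'a set" where
  "subgroup_join G A B = generate G (A \<union> B)"

definition interval_coatoms :: "('a, 'b) monoid_scheme \<Rightarrow> 'a set \<Rightarrow> 'a set \<Rightarrow> 'a set set" where
  "interval_coatoms G H K =
     {M \<in> subgroup_interval G H K. M \<noteq> K \<and>
        (\<forall>L \<in> subgroup_interval G H K. M \<subseteq> L \<longrightarrow> L = M \<or> L = K)}"

text \<open>Meet of all coatoms (the meet of the empty family is the top K).\<close>
definition top_interval_bottom :: "('a, 'b) monoid_scheme \<Rightarrow> 'a set \<Rightarrow> 'a set \<Rightarrow> 'a set" where
  "top_interval_bottom G H K = K \<inter> \<Inter> (interval_coatoms G H K)"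

text \<open>The interval [B,T] (a sublattice of the subgroup lattice, meet = intersection,
  join = generated subgroup) is a Boolean lattice: distributive, and every element
  has a unique complement (bounded holds since it has bottom B and top T).\<close>
definition boolean_subgroup_interval :: "('a, 'b) monoid_scheme \<Rightarrow> 'a set \<Rightarrow> 'a set \<Rightarrow> bool" where
  "boolean_subgroup_interval G lo hi \<longleftrightarrow>
     (\<forall>x \<in> subgroup_interval G lo hi. \<forall>y \<in> subgroup_interval G lo hi. \<forall>z \<in> subgroup_interval G lo hi.
        x \<inter> subgroup_join G y z = subgroup_join G (x \<inter> y) (x \<inter> z)) \<and>
     (\<forall>x \<in> subgroup_interval G lo hi. \<exists>!y. y \<in> subgroup_interval G lo hi \<and>
        x \<inter> y = lo \<and> subgroup_join G x y = hi)"

definition top_boolean :: "('a, 'b) monoid_scheme \<Rightarrow> 'a set \<Rightarrow> 'a set \<Rightarrow> bool" where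
  "top_boolean G H K \<longleftrightarrow> boolean_subgroup_interval G (top_interval_bottom G H K) K"

definition min_gen_card :: "('a, 'b) monoid_scheme \<Rightarrow> nat" where
  "min_gen_card G = Min {card S | S. S \<subseteq> carrier G \<and> generate G S = carrier G}"

end

theory Submission
  imports Defs
begin

context group
begin

lemma gen_absorb:
  assumes "A \<subseteq> carrier G" "B \<subseteq> carrier G"
  shows "generate G (A \<union> B) = generate G (generate G A \<union> B)"
proof
  show "generate G (A \<union> B) \<subseteq> generate G (generate G A \<union> B)"
    by (rule mono_generate) (auto intro: generate.incl)
  have "generate G A \<subseteq> generate G (A \<union> B)" by (rule mono_generate) auto
  moreover have "B \<subseteq> generate G (A \<union> B)" by (auto intro: generate.incl)
  ultimately show "generate G (generate G A \<union> B) \<subseteq> generate G (A \<union> B)"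
    using generate_subgroup_incl[OF _ generate_is_subgroup[of "A \<union> B"]] assms by auto
qed

lemma coatom_join:
  assumes M: "M \<in> interval_coatoms G H K" and a: "a \<in> subgroup_interval G H K"
    and na: "\<not> a \<subseteq> M" and K: "subgroup K G"
  shows "subgroup_join G a M = K"
proof -
  have Ms: "subgroup M G" "H \<subseteq> M" "M \<subseteq> K"
    and Mmax: "\<forall>L \<in> subgroup_interval G H K. M \<subseteq> L \<longrightarrow> L = M \<or> L = K"
    using M unfolding interval_coatoms_def subgroup_interval_def by auto
  have as: "subgroup a G" "a \<subseteq> K" using a unfolding subgroup_interval_def by auto
  define J where "J = generate G (a \<union> M)"
  have sub: "a \<union> M \<subseteq> carrier G" using subgroup.subset[OF as(1)] subgroup.subset[OF Ms(1)] by auto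
  have J: "subgroup J G" unfolding J_def using generate_is_subgroup[OF sub] .
  have aJ: "a \<union> M \<subseteq> J" unfolding J_def by (auto intro: generate.incl)
  have JK: "J \<subseteq> K" unfolding J_def by (rule generate_subgroup_incl[OF _ K]) (use as Ms in auto)
  have "J \<in> subgroup_interval G H K" using J aJ JK Ms unfolding subgroup_interval_def by auto
  then have "J = M \<or> J = K" using Mmax aJ by auto
  then show ?thesis using aJ na unfolding subgroup_join_def J_def by auto
qed

lemma meet_prime:
  assumes dist: "\<forall>x \<in> subgroup_interval G t K. \<forall>y \<in> subgroup_interval G t K. \<forall>z \<in> subgroup_interval G t K.
        x \<inter> subgroup_join G y z = subgroup_join G (x \<inter> y) (x \<inter> z)"
    and Ht: "H \<subseteq> t" and K: "subgroup K G"
    and a: "a \<in> subgroup_interval G t K" and b: "b \<in> subgroup_interval G t K"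
    and M: "M \<in> interval_coatoms G H K" and tM: "t \<subseteq> M"
    and na: "\<not> a \<subseteq> M" and nb: "\<not> b \<subseteq> M"
  shows "\<not> (a \<inter> b \<subseteq> M)"
proof
  assume ab: "a \<inter> b \<subseteq> M"
  have Ms: "subgroup M G" "M \<subseteq> K"
    using M unfolding interval_coatoms_def subgroup_interval_def by auto
  have Mi: "M \<in> subgroup_interval G t K" using Ms tM unfolding subgroup_interval_def by auto
  have bi: "b \<in> subgroup_interval G H K" using b Ht unfolding subgroup_interval_def by auto
  have j: "subgroup_join G b M = K" using coatom_join[OF M bi nb K] .
  have aK: "a \<subseteq> K" using a unfolding subgroup_interval_def by auto
  have "a = a \<inter> subgroup_join G b M" using j aK by auto
  also have "\<dots> = subgroup_join G (a \<inter> b) (a \<inter> M)" using dist[rule_format, OF a b Mi] .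
  also have "\<dots> \<subseteq> M" unfolding subgroup_join_def
    by (rule generate_subgroup_incl[OF _ Ms(1)]) (use ab in auto)
  finally show False using na by simp
qed

lemma in_coatom:
  assumes fin: "finite (carrier G)" and L: "L \<in> subgroup_interval G H K" and LK: "L \<noteq> K"
  shows "\<exists>M \<in> interval_coatoms G H K. L \<subseteq> M"
proof -
  define S where "S = {M \<in> subgroup_interval G H K. L \<subseteq> M \<and> M \<noteq> K}"
  have "S \<subseteq> Pow (carrier G)" unfolding S_def subgroup_interval_def
    by (auto dest: subgroup.subset)
  then have "finite S" by (rule finite_subset) (use fin in auto)
  moreover have "S \<noteq> {}" using L LK unfolding S_def by auto
  ultimately obtain M where M: "M \<in> S" and mx: "\<forall>b\<in>S. M \<subseteq> b \<longrightarrow> M = b"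
    using finite_has_maximal by blast
  have "M \<in> interval_coatoms G H K"
    unfolding interval_coatoms_def using M mx unfolding S_def by auto
  then show ?thesis using M unfolding S_def by auto
qed

lemma one_step:
  assumes fin: "finite (carrier G)" and H: "subgroup H G" and K: "subgroup K G"
    and HK: "H \<subseteq> K" and tb: "top_boolean G H K"
  shows "\<exists>g \<in> K. generate G (H \<union> {g}) = K"
proof -
  define C where "C = interval_coatoms G H K"
  define t where "t = top_interval_bottom G H K"
  have t_def': "t = K \<inter> \<Inter> C" unfolding t_def C_def top_interval_bottom_def by simp
  have Cprops: "\<And>M. M \<in> C \<Longrightarrow> subgroup M G \<and> H \<subseteq> M \<and> M \<subseteq> K \<and> M \<noteq> K \<and>
        (\<forall>L \<in> subgroup_interval G H K. M \<subseteq> L \<longrightarrow> L = M \<or> L = K)"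
    unfolding C_def interval_coatoms_def subgroup_interval_def by auto
  have Ht: "H \<subseteq> t" using t_def' Cprops HK by auto
  have tM: "\<And>M. M \<in> C \<Longrightarrow> t \<subseteq> M" using t_def' by auto
  have dist: "\<forall>x \<in> subgroup_interval G t K. \<forall>y \<in> subgroup_interval G t K. \<forall>z \<in> subgroup_interval G t K.
        x \<inter> subgroup_join G y z = subgroup_join G (x \<inter> y) (x \<inter> z)"
    using tb unfolding top_boolean_def boolean_subgroup_interval_def t_def by blast
  have Cfin: "finite C"
  proof -
    have "C \<subseteq> Pow (carrier G)" using Cprops subgroup.subset by fastforce
    then show ?thesis by (rule finite_subset) (use fin in auto)
  qed
  have Xint: "K \<inter> \<Inter> F \<in> subgroup_interval G t K" if "F \<subseteq> C" for F
  proof -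
    have "subgroup (\<Inter> (insert K F)) G"
      by (rule subgroups_Inter) (use that Cprops K in auto)
    moreover have "t \<subseteq> K \<inter> \<Inter> F" using t_def' that by auto
    ultimately show ?thesis unfolding subgroup_interval_def by auto
  qed
  have indep: "F \<subseteq> C \<longrightarrow> (\<forall>N \<in> C - F. \<not> (K \<inter> \<Inter> F \<subseteq> N))" if "finite F" for F
    using that
  proof (induction F rule: finite_induct)
    case empty
    then show ?case using Cprops by auto
  next
    case (insert M F)
    show ?case
    proof (intro impI ballI)
      fix N assume FC: "insert M F \<subseteq> C" and N: "N \<in> C - insert M F"
      have X: "K \<inter> \<Inter> F \<in> subgroup_interval G t K" using Xint FC by auto
      have nX: "\<not> (K \<inter> \<Inter> F \<subseteq> N)" using insert.IH FC N by auto
      have Mi: "M \<in> subgroup_interval G t K" using FC Cprops tM unfolding subgroup_interval_def by auto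
      have Ni: "N \<in> subgroup_interval G H K" using N Cprops unfolding subgroup_interval_def by auto
      have nM: "\<not> M \<subseteq> N" using Cprops[of M] FC N Ni Cprops[of N] by auto
      have "\<not> ((K \<inter> \<Inter> F) \<inter> M \<subseteq> N)"
        using meet_prime[OF dist Ht K X Mi, of N] N tM nX nM unfolding C_def by auto
      then show "\<not> (K \<inter> \<Inter> (insert M F) \<subseteq> N)" by (simp add: Int_ac)
    qed
  qed
  have avoid: "F \<subseteq> C \<longrightarrow> (\<exists>g \<in> K. \<forall>M \<in> F. g \<notin> M)" if "finite F" for F
    using that
  proof (induction F rule: finite_induct)
    case empty
    then show ?case using subgroup.one_closed[OF K] by auto
  next
    case (insert N F)
    show ?case
    proof
      assume FC: "insert N F \<subseteq> C"
      obtain g where g: "g \<in> K" "\<forall>M \<in> F. g \<notin> M" using insert.IH FC by auto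
      show "\<exists>g \<in> K. \<forall>M \<in> insert N F. g \<notin> M"
      proof (cases "g \<in> N")
        case False then show ?thesis using g by auto
      next
        case True
        have "\<not> (K \<inter> \<Inter> F \<subseteq> N)" using indep[OF insert.hyps(1)] FC insert.hyps(2) by auto
        then obtain a where a: "a \<in> K" "\<forall>M\<in>F. a \<in> M" "a \<notin> N" by auto
        have gc: "g \<in> carrier G" and ac: "a \<in> carrier G" using g a subgroup.subset[OF K] by auto
        have "g \<otimes> a \<in> K" using g a subgroup.m_closed[OF K] by auto
        moreover have "g \<otimes> a \<notin> M" if "M \<in> F" for M
        proof
          assume ga: "g \<otimes> a \<in> M"
          have sM: "subgroup M G" using Cprops FC that by auto
          have "(g \<otimes> a) \<otimes> inv a \<in> M"
            using ga a that subgroup.m_closed[OF sM] subgroup.m_inv_closed[OF sM] by auto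
          moreover have "(g \<otimes> a) \<otimes> inv a = g" using gc ac by (simp add: m_assoc)
          ultimately show False using g that by auto
        qed
        moreover have "g \<otimes> a \<notin> N"
        proof
          assume ga: "g \<otimes> a \<in> N"
          have sN: "subgroup N G" using Cprops FC by auto
          have "inv g \<otimes> (g \<otimes> a) \<in> N"
            using ga True subgroup.m_closed[OF sN] subgroup.m_inv_closed[OF sN] by auto
          moreover have "inv g \<otimes> (g \<otimes> a) = a" using gc ac by (simp add: m_assoc[symmetric])
          ultimately show False using a by auto
        qed
        ultimately show ?thesis by auto
      qed
    qed
  qed
  obtain g where g: "g \<in> K" "\<forall>M \<in> C. g \<notin> M" using avoid[OF Cfin] by auto
  have sub: "H \<union> {g} \<subseteq> carrier G" using g subgroup.subset[OF H] subgroup.subset[OF K] by auto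
  define L where "L = generate G (H \<union> {g})"
  have Ls: "subgroup L G" unfolding L_def using generate_is_subgroup[OF sub] .
  have HL: "H \<union> {g} \<subseteq> L" unfolding L_def by (auto intro: generate.incl)
  have LK: "L \<subseteq> K" unfolding L_def by (rule generate_subgroup_incl[OF _ K]) (use HK g in auto)
  have Li: "L \<in> subgroup_interval G H K" using Ls HL LK unfolding subgroup_interval_def by auto
  have "L = K"
  proof (rule ccontr)
    assume "L \<noteq> K"
    then obtain M where "M \<in> C" "L \<subseteq> M" using in_coatom[OF fin Li] unfolding C_def by auto
    then show False using g HL by auto
  qed
  then show ?thesis using g unfolding L_def by auto
qed

end

theorem corollary6p2:
  fixes G :: "('a, 'b) monoid_scheme" and Hs :: "nat \<Rightarrow> 'a set" and l :: nat
  assumes "group G" and "finite (carrier G)"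
    and "\<forall>i \<le> l. subgroup (Hs i) G"
    and "Hs 0 = {\<one>\<^bsub>G\<^esub>}" and "Hs l = carrier G"
    and "\<forall>i < l. Hs i \<subset> Hs (Suc i)"
    and "\<forall>i < l. top_boolean G (Hs i) (Hs (Suc i))"
  shows "min_gen_card G \<le> l"
proof -
  interpret group G by fact
  have "\<forall>i < l. \<exists>g. g \<in> Hs (Suc i) \<and> generate G (Hs i \<union> {g}) = Hs (Suc i)"
  proof (intro allI impI)
    fix i assume i: "i < l"
    show "\<exists>g. g \<in> Hs (Suc i) \<and> generate G (Hs i \<union> {g}) = Hs (Suc i)"
      using one_step[OF assms(2), of "Hs i" "Hs (Suc i)"] i assms(3,6,7) by auto
  qed
  then obtain f where f: "\<forall>i < l. f i \<in> Hs (Suc i) \<and> generate G (Hs i \<union> {f i}) = Hs (Suc i)"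
    by metis
  have fc: "f i \<in> carrier G" if "i < l" for i
    using f that subgroup.subset[of "Hs (Suc i)" G] assms(3) by (auto simp: Suc_le_eq)
  have gen: "k \<le> l \<longrightarrow> generate G (f ` {..<k}) = Hs k" for k
  proof (induction k)
    case 0
    then show ?case using assms(4) generate_empty by simp
  next
    case (Suc k)
    show ?case
    proof
      assume k: "Suc k \<le> l"
      have "f ` {..<Suc k} = f ` {..<k} \<union> {f k}" by (simp add: lessThan_Suc Un_commute)
      moreover have "f ` {..<k} \<subseteq> carrier G" "{f k} \<subseteq> carrier G" using fc k by auto
      ultimately have "generate G (f ` {..<Suc k}) = generate G (generate G (f ` {..<k}) \<union> {f k})"
        using gen_absorb[of "f ` {..<k}" "{f k}"] by simp
      also have "\<dots> = Hs (Suc k)" using Suc.IH k f by auto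
      finally show "generate G (f ` {..<Suc k}) = Hs (Suc k)" .
    qed
  qed
  have S: "f ` {..<l} \<subseteq> carrier G" "generate G (f ` {..<l}) = carrier G"
    using fc gen assms(5) by auto
  have fin: "finite {card S | S. S \<subseteq> carrier G \<and> generate G S = carrier G}"
  proof -
    have "{card S | S. S \<subseteq> carrier G \<and> generate G S = carrier G} \<subseteq> card ` Pow (carrier G)" by auto
    then show ?thesis by (rule finite_subset) (use assms(2) in auto)
  qed
  have "min_gen_card G \<le> card (f ` {..<l})"
    unfolding min_gen_card_def using S by (intro Min_le[OF fin]) auto
  also have "\<dots> \<le> l" using card_image_le[of "{..<l}" f] by simp
  finally show ?thesis .
qed

end
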